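(* Let $\varphi\colon G\to G$ be an endomorphism of an abelian group $G$. If $S\leq G$ is a positive generator for $\varphi$, then $h_{\mathrm{alg}}(\varphi)=h_{\mathrm{alg}}(\varphi,S)$. Likewise, if $\varphi$ is an automorphism and $S\leq G$ is a generator for $\varphi$, then $h_{\mathrm{alg}}(\varphi)=h_{\mathrm{alg}}(\varphi,S)$. In particular, every positively expansive endomorphism and every expansive automorphism has finite algebraic entropy.
   Context: $\mathbb N=\{0,1,2,\dots\}$. A finite subgroup $S\leq G$ is a positive generator for an endomorphism $\varphi$ if for every finite subgroup $F\leq G$ there is $n\in\mathbb N$ with $F\subseteq\sum_{k=0}^n\varphi^kS$; $\varphi$ is positively expansive if it has a positive generator. For an automorphism $\varphi$, a finite subgroup $S$ is a generator if for every finite subgroup $F\leq G$ there is $n\in\mathbb N$ with $F\subseteq\sum_{|k|\leq n}\varphi^kS$; $\varphi$ is expansive if it has a generator. For a finite subgroup $F\leq G$, $h_{\mathrm{alg}}(\varphi,F)=\limsup_{n}\frac1n\log\bigl|\sum_{k=0}^{n-1}\varphi^kF\bigr|$, and $h_{\mathrm{alg}}(\varphi)=\sup_F h_{\mathrm{alg}}(\varphi,F)$, the supremum over all finite subgroups $F\leq G$. *)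

theory Defs
  imports "HOL-Analysis.Analysis"
begin

text \<open>Abelian group G is modelled as a type of class ab_group_add (G = UNIV).\<close>

definition is_subgroup :: "'a::ab_group_add set \<Rightarrow> bool" where
  "is_subgroup H \<longleftrightarrow> 0 \<in> H \<and> (\<forall>x\<in>H. \<forall>y\<in>H. x + y \<in> H) \<and> (\<forall>x\<in>H. - x \<in> H)"

definition finite_subgroup :: "'a::ab_group_add set \<Rightarrow> bool" where
  "finite_subgroup H \<longleftrightarrow> is_subgroup H \<and> finite H"

definition endomorphism :: "('a::ab_group_add \<Rightarrow> 'a) \<Rightarrow> bool" where
  "endomorphism \<phi> \<longleftrightarrow> (\<forall>x y. \<phi> (x + y) = \<phi> x + \<phi> y)"

definition automorphism :: "('a::ab_group_add \<Rightarrow> 'a) \<Rightarrow> bool" where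
  "automorphism \<phi> \<longleftrightarrow> endomorphism \<phi> \<and> bij \<phi>"

definition sumset :: "'i set \<Rightarrow> ('i \<Rightarrow> 'a::comm_monoid_add set) \<Rightarrow> 'a set" where
  "sumset I A = {sum f I | f. \<forall>i\<in>I. f i \<in> A i}"

definition int_pow :: "('a \<Rightarrow> 'a) \<Rightarrow> int \<Rightarrow> 'a \<Rightarrow> 'a" where
  "int_pow \<phi> k = (if 0 \<le> k then \<phi> ^^ nat k else (inv \<phi>) ^^ nat (- k))"

definition positive_generator :: "('a::ab_group_add \<Rightarrow> 'a) \<Rightarrow> 'a set \<Rightarrow> bool" where
  "positive_generator \<phi> S \<longleftrightarrow> finite_subgroup S \<and>
     (\<forall>F. finite_subgroup F \<longrightarrow> (\<exists>n::nat. F \<subseteq> sumset {0..n} (\<lambda>k. (\<phi> ^^ k) ` S)))"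

definition positively_expansive :: "('a::ab_group_add \<Rightarrow> 'a) \<Rightarrow> bool" where
  "positively_expansive \<phi> \<longleftrightarrow> (\<exists>S. positive_generator \<phi> S)"

definition generator :: "('a::ab_group_add \<Rightarrow> 'a) \<Rightarrow> 'a set \<Rightarrow> bool" where
  "generator \<phi> S \<longleftrightarrow> finite_subgroup S \<and>
     (\<forall>F. finite_subgroup F \<longrightarrow>
        (\<exists>n::nat. F \<subseteq> sumset {- int n..int n} (\<lambda>k. int_pow \<phi> k ` S)))"

definition expansive :: "('a::ab_group_add \<Rightarrow> 'a) \<Rightarrow> bool" where
  "expansive \<phi> \<longleftrightarrow> (\<exists>S. generator \<phi> S)"

definition trajectory :: "('a::ab_group_add \<Rightarrow> 'a) \<Rightarrow> 'a set \<Rightarrow> nat \<Rightarrow> 'a set" where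
  "trajectory \<phi> F n = sumset {..<n} (\<lambda>k. (\<phi> ^^ k) ` F)"

definition h_alg_F :: "('a::ab_group_add \<Rightarrow> 'a) \<Rightarrow> 'a set \<Rightarrow> ereal" where
  "h_alg_F \<phi> F = limsup (\<lambda>n. ereal (ln (real (card (trajectory \<phi> F n))) / real n))"

definition h_alg :: "('a::ab_group_add \<Rightarrow> 'a) \<Rightarrow> ereal" where
  "h_alg \<phi> = (SUP F\<in>{F. finite_subgroup F}. h_alg_F \<phi> F)"

end

theory Submission imports Defs begin

lemma sumset_iff: "x \<in> sumset I A \<longleftrightarrow> (\<exists>f. x = sum f I \<and> (\<forall>i\<in>I. f i \<in> A i))"
  unfolding sumset_def by blast

lemma sumset_zero: "(\<forall>i\<in>I. 0 \<in> A i) \<Longrightarrow> 0 \<in> sumset I A"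
  unfolding sumset_iff by (rule exI[of _ "\<lambda>_. 0"]) simp

lemma sumset_single:
  assumes "finite I" "i \<in> I" "\<forall>j\<in>I. 0 \<in> A j"
  shows "A i \<subseteq> sumset I A"
proof
  fix x assume x: "x \<in> A i"
  let ?f = "\<lambda>j. if j = i then x else 0"
  have "sum ?f I = x" using assms by (simp add: sum.delta)
  moreover have "\<forall>j\<in>I. ?f j \<in> A j" using x assms by auto
  ultimately show "x \<in> sumset I A" unfolding sumset_iff by (intro exI[of _ ?f]) auto
qed

lemma subgroup_sum_closed:
  assumes "is_subgroup H" "\<forall>i\<in>I. f i \<in> H"
  shows "sum f I \<in> H"
  using assms(2)
proof (induction I rule: infinite_finite_induct)
  case (infinite A) then show ?case using assms(1) by (simp add: is_subgroup_def)
next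
  case empty then show ?case using assms(1) by (simp add: is_subgroup_def)
next
  case (insert x F) then show ?case using assms(1) by (simp add: is_subgroup_def)
qed

lemma sumset_le_subgroup:
  assumes "is_subgroup H" "\<forall>i\<in>I. A i \<subseteq> H"
  shows "sumset I A \<subseteq> H"
proof
  fix x assume "x \<in> sumset I A"
  then obtain f where "x = sum f I" "\<forall>i\<in>I. f i \<in> A i" unfolding sumset_iff by blast
  then show "x \<in> H" using assms subgroup_sum_closed[of H I f] by blast
qed

lemma sumset_subgroup:
  assumes "\<forall>i\<in>I. is_subgroup (A i)"
  shows "is_subgroup (sumset I A)"
proof -
  have "0 \<in> sumset I A" using assms by (intro sumset_zero) (auto simp: is_subgroup_def)
  moreover have "x + y \<in> sumset I A" if xy: "x \<in> sumset I A" "y \<in> sumset I A" for x y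
  proof -
    obtain f where f: "x = sum f I" "\<forall>i\<in>I. f i \<in> A i"
      using xy(1) unfolding sumset_iff by blast
    obtain g where g: "y = sum g I" "\<forall>i\<in>I. g i \<in> A i"
      using xy(2) unfolding sumset_iff by blast
    have "x + y = sum (\<lambda>i. f i + g i) I" using f g by (simp add: sum.distrib)
    moreover have "\<forall>i\<in>I. f i + g i \<in> A i" using f g assms by (auto simp: is_subgroup_def)
    ultimately show ?thesis unfolding sumset_iff by blast
  qed
  moreover have "- x \<in> sumset I A" if xx: "x \<in> sumset I A" for x
  proof -
    obtain f where f: "x = sum f I" "\<forall>i\<in>I. f i \<in> A i"
      using xx unfolding sumset_iff by blast
    have "- x = sum (\<lambda>i. - f i) I" using f by (simp add: sum_negf)
    moreover have "\<forall>i\<in>I. - f i \<in> A i" using f assms by (auto simp: is_subgroup_def)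
    ultimately show ?thesis unfolding sumset_iff by blast
  qed
  ultimately show ?thesis unfolding is_subgroup_def by blast
qed

lemma endo_0: "endomorphism \<phi> \<Longrightarrow> \<phi> 0 = 0"
  unfolding endomorphism_def by (metis add_cancel_right_right)

lemma endo_neg: "endomorphism \<phi> \<Longrightarrow> \<phi> (- x) = - \<phi> x"
  by (metis endo_0 endomorphism_def add.right_inverse neg_eq_iff_add_eq_0)

lemma endo_pow: "endomorphism \<phi> \<Longrightarrow> endomorphism (\<phi> ^^ k)"
  by (induction k) (auto simp: endomorphism_def)

lemma endo_sum: "endomorphism \<phi> \<Longrightarrow> \<phi> (sum f I) = sum (\<lambda>i. \<phi> (f i)) I"
  by (induction I rule: infinite_finite_induct) (auto simp: endo_0 endomorphism_def)

lemma endo_image_subgroup: "endomorphism \<phi> \<Longrightarrow> is_subgroup H \<Longrightarrow> is_subgroup (\<phi> ` H)"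
proof -
  assume e: "endomorphism \<phi>" and h: "is_subgroup H"
  have "0 \<in> \<phi> ` H" using h e by (metis endo_0 image_eqI is_subgroup_def)
  moreover have "x + y \<in> \<phi> ` H" if xy: "x \<in> \<phi> ` H" "y \<in> \<phi> ` H" for x y
  proof -
    obtain a b where "a \<in> H" "b \<in> H" "x = \<phi> a" "y = \<phi> b" using xy by blast
    then have "x + y = \<phi> (a + b)" "a + b \<in> H" using e h by (auto simp: endomorphism_def is_subgroup_def)
    then show ?thesis by blast
  qed
  moreover have "- x \<in> \<phi> ` H" if xx: "x \<in> \<phi> ` H" for x
  proof -
    obtain a where "a \<in> H" "x = \<phi> a" using xx by blast
    then have "- x = \<phi> (- a)" "- a \<in> H" using e h by (auto simp: endo_neg is_subgroup_def)
    then show ?thesis by blast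
  qed
  ultimately show ?thesis unfolding is_subgroup_def by blast
qed

lemma endo_image_sumset:
  assumes "endomorphism \<phi>"
  shows "\<phi> ` sumset I A \<subseteq> sumset I (\<lambda>i. \<phi> ` A i)"
proof
  fix y assume "y \<in> \<phi> ` sumset I A"
  then obtain x where x: "x \<in> sumset I A" "y = \<phi> x" by blast
  then obtain f where f: "y = \<phi> (sum f I)" "\<forall>i\<in>I. f i \<in> A i" unfolding sumset_iff by blast
  have "y = sum (\<lambda>i. \<phi> (f i)) I" using f endo_sum[OF assms] by simp
  moreover have "\<forall>i\<in>I. \<phi> (f i) \<in> \<phi> ` A i" using f by blast
  ultimately show "y \<in> sumset I (\<lambda>i. \<phi> ` A i)" unfolding sumset_iff by blast
qed

lemma sumset_insert:
  assumes "i \<notin> I" "finite I"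
  shows "sumset (insert i I) A \<subseteq> (\<lambda>(x,y). x + y) ` (A i \<times> sumset I A)"
proof
  fix z assume "z \<in> sumset (insert i I) A"
  then obtain f where f: "z = sum f (insert i I)" "\<forall>j\<in>insert i I. f j \<in> A j" unfolding sumset_iff by blast
  have "z = f i + sum f I" using f assms by simp
  moreover have "sum f I \<in> sumset I A" using f unfolding sumset_iff by blast
  ultimately show "z \<in> (\<lambda>(x,y). x + y) ` (A i \<times> sumset I A)" using f by force
qed

lemma sumset_card:
  assumes "finite I" "\<forall>i\<in>I. finite (A i)"
  shows "finite (sumset I A) \<and> card (sumset I A) \<le> (\<Prod>i\<in>I. card (A i))"
  using assms
proof (induction I rule: finite_induct)
  case empty
  have "sumset {} A = {0}" unfolding sumset_def by auto
  then show ?case by simp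
next
  case (insert i I)
  let ?B = "(\<lambda>(x,y). x + y) ` (A i \<times> sumset I A)"
  have fin: "finite ?B" using insert by auto
  have "card ?B \<le> card (A i \<times> sumset I A)" by (rule card_image_le) (use insert in auto)
  also have "\<dots> = card (A i) * card (sumset I A)" by (simp add: card_cartesian_product)
  also have "\<dots> \<le> card (A i) * (\<Prod>i\<in>I. card (A i))" using insert by simp
  finally have "card ?B \<le> (\<Prod>i\<in>insert i I. card (A i))" using insert by simp
  moreover have "sumset (insert i I) A \<subseteq> ?B" by (rule sumset_insert) (use insert in auto)
  ultimately show ?case using fin by (meson card_mono finite_subset order_trans)
qed


lemma pow_image_subgroup: "endomorphism \<phi> \<Longrightarrow> is_subgroup S \<Longrightarrow> is_subgroup ((\<phi> ^^ k) ` S)"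
  using endo_image_subgroup endo_pow by blast

lemma traj_subgroup:
  assumes "endomorphism \<phi>" "is_subgroup S"
  shows "is_subgroup (trajectory \<phi> S N)"
  unfolding trajectory_def using assms by (intro sumset_subgroup) (auto intro: pow_image_subgroup)

lemma traj_key:
  assumes e: "endomorphism \<phi>" and S: "is_subgroup S" and F: "F \<subseteq> trajectory \<phi> S N"
  shows "trajectory \<phi> F m \<subseteq> trajectory \<phi> S (m + N)"
proof -
  let ?H = "trajectory \<phi> S (m + N)"
  have H: "is_subgroup ?H" using traj_subgroup[OF e S] .
  have z: "\<forall>l\<in>{..<m+N}. 0 \<in> (\<phi> ^^ l) ` S"
    using pow_image_subgroup[OF e S] unfolding is_subgroup_def by blast
  show ?thesis unfolding trajectory_def[of _ F]
  proof (rule sumset_le_subgroup[OF H], intro ballI)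
    fix k assume k: "k \<in> {..<m}"
    have "(\<phi> ^^ k) ` F \<subseteq> (\<phi> ^^ k) ` trajectory \<phi> S N" using F by blast
    also have "\<dots> \<subseteq> sumset {..<N} (\<lambda>j. (\<phi> ^^ k) ` (\<phi> ^^ j) ` S)"
      unfolding trajectory_def by (rule endo_image_sumset[OF endo_pow[OF e]])
    also have "\<dots> \<subseteq> ?H"
    proof (rule sumset_le_subgroup[OF H], intro ballI)
      fix j assume j: "j \<in> {..<N}"
      have "(\<phi> ^^ k) ` (\<phi> ^^ j) ` S = (\<phi> ^^ (k + j)) ` S"
        by (simp add: image_comp funpow_add)
      also have "\<dots> \<subseteq> ?H" unfolding trajectory_def
        by (rule sumset_single) (use k j z in auto)
      finally show "(\<phi> ^^ k) ` (\<phi> ^^ j) ` S \<subseteq> ?H" .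
    qed
    finally show "(\<phi> ^^ k) ` F \<subseteq> ?H" .
  qed
qed

lemma traj_card:
  assumes "finite S" "0 \<in> S" "endomorphism \<phi>"
  shows "finite (trajectory \<phi> S m) \<and> 1 \<le> card (trajectory \<phi> S m) \<and> card (trajectory \<phi> S m) \<le> card S ^ m"
proof -
  have fc: "finite (trajectory \<phi> S m) \<and> card (trajectory \<phi> S m) \<le> (\<Prod>k\<in>{..<m}. card ((\<phi> ^^ k) ` S))"
    unfolding trajectory_def using assms by (intro sumset_card) auto
  have "(\<Prod>k\<in>{..<m}. card ((\<phi> ^^ k) ` S)) \<le> (\<Prod>k\<in>{..<m}. card S)"
    by (intro prod_mono) (auto intro: card_image_le assms)
  then have le: "card (trajectory \<phi> S m) \<le> card S ^ m" using fc by simp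
  have "0 \<in> trajectory \<phi> S m" unfolding trajectory_def using assms endo_0[OF endo_pow[OF assms(3)]]
    by (intro sumset_zero) (metis image_eqI)
  then have "card (trajectory \<phi> S m) \<noteq> 0" using fc by auto
  then show ?thesis using fc le by (simp add: Suc_le_eq card_gt_0_iff)
qed


lemma limsup_key:
  fixes a b :: "nat \<Rightarrow> real" and K :: real and c :: nat
  assumes a0: "\<forall>m. 0 \<le> a m" and aK: "\<forall>m. a m \<le> real m * K" and ba: "\<forall>m. b m \<le> a (m + c)"
  shows "limsup (\<lambda>m. ereal (b m / real m)) \<le> limsup (\<lambda>m. ereal (a m / real m))"
proof -
  let ?u = "\<lambda>m. ereal (a (m + c) / real (m + c))"
  let ?v = "\<lambda>m. ereal (real c * K / real m)"
  have pt: "b m / real m \<le> a (m + c) / real (m + c) + real c * K / real m" if m: "m \<ge> 1" for m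
  proof -
    have mp: "real m > 0" using m by simp
    have "b m / real m \<le> a (m + c) / real m" using ba mp by (simp add: divide_right_mono)
    also have "\<dots> \<le> a (m + c) / real (m + c) + real c * K / real m"
    proof -
      have "a (m + c) * real c \<le> (real (m + c) * K) * real c"
        using aK[rule_format, of "m + c"] by (intro mult_right_mono) auto
      have Np: "real (m + c) > 0" using mp by simp
      have eq: "a (m + c) / real m - a (m + c) / real (m + c) = a (m + c) * real c / (real m * real (m + c))"
        using mp Np by (simp add: field_simps)
      have "a (m + c) * real c / (real m * real (m + c)) \<le> (real (m + c) * K) * real c / (real m * real (m + c))"
        using \<open>a (m + c) * real c \<le> (real (m + c) * K) * real c\<close> mp Np by (intro divide_right_mono) auto
      also have "\<dots> = real (m + c) * (real c * K) / (real (m + c) * real m)" by (simp add: ac_simps)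
      also have "\<dots> = real c * K / real m" using Np by (rule nonzero_mult_divide_mult_cancel_left[OF less_imp_neq[symmetric]])
      finally show ?thesis using eq by linarith
    qed
    finally show ?thesis .
  qed
  have "limsup (\<lambda>m. ereal (b m / real m)) \<le> limsup (\<lambda>m. ?u m + ?v m)"
    by (rule Limsup_mono) (use pt in \<open>auto simp: eventually_sequentially\<close>)
  also have "\<dots> \<le> limsup ?u + limsup ?v" by (rule ereal_limsup_add_mono)
  also have "limsup ?u = limsup (\<lambda>m. ereal (a m / real m))"
    using limsup_shift_k[of "\<lambda>m. ereal (a m / real m)" c] by simp
  also have "limsup ?v = 0"
  proof -
    have "?v \<longlonglongrightarrow> ereal 0" by (intro tendsto_ereal lim_const_over_n)
    then have "limsup ?v = ereal 0" by (intro lim_imp_Limsup) auto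
    then show ?thesis by (simp add: zero_ereal_def)
  qed
  finally show ?thesis by simp
qed

lemma limsup_bound:
  fixes a :: "nat \<Rightarrow> real"
  assumes "\<forall>m. a m \<le> real m * K" "K \<ge> 0"
  shows "limsup (\<lambda>m. ereal (a m / real m)) \<le> ereal K"
proof (rule Limsup_bounded, rule always_eventually, intro allI)
  fix m
  show "ereal (a m / real m) \<le> ereal K"
  proof (cases "m = 0")
    case True then show ?thesis using assms by simp
  next
    case False then show ?thesis using assms by (simp add: divide_le_eq mult.commute)
  qed
qed


lemma h_le:
  assumes e: "endomorphism \<phi>" and S: "finite_subgroup S" and F: "finite_subgroup F"
    and cm: "\<forall>m. card (trajectory \<phi> F m) \<le> card (trajectory \<phi> S (m + c))"
  shows "h_alg_F \<phi> F \<le> h_alg_F \<phi> S"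
proof -
  have S0: "finite S" "0 \<in> S" using S by (auto simp: finite_subgroup_def is_subgroup_def)
  have F0: "finite F" "0 \<in> F" using F by (auto simp: finite_subgroup_def is_subgroup_def)
  note tS = traj_card[OF S0 e] and tF = traj_card[OF F0 e]
  let ?a = "\<lambda>m. ln (real (card (trajectory \<phi> S m)))"
  let ?b = "\<lambda>m. ln (real (card (trajectory \<phi> F m)))"
  have cS: "card S \<ge> 1" using S0 by (metis One_nat_def Suc_leI card_gt_0_iff empty_iff)
  have "\<forall>m. 0 \<le> ?a m" using tS by simp
  moreover have "\<forall>m. ?a m \<le> real m * ln (real (card S))"
  proof
    fix m
    have "?a m \<le> ln (real (card S ^ m))" using tS[of m] by (intro ln_mono) (simp_all only: of_nat_le_iff, auto)
    also have "\<dots> = real m * ln (real (card S))" using cS by (simp add: ln_realpow)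
    finally show "?a m \<le> real m * ln (real (card S))" .
  qed
  moreover have "\<forall>m. ?b m \<le> ?a (m + c)"
  proof
    fix m
    have "1 \<le> card (trajectory \<phi> F m)" using tF[of m] by simp
    then show "?b m \<le> ?a (m + c)" using cm by (intro ln_mono) auto
  qed
  ultimately show ?thesis unfolding h_alg_F_def by (rule limsup_key)
qed

lemma h_fin:
  assumes e: "endomorphism \<phi>" and S: "finite_subgroup S"
  shows "h_alg_F \<phi> S < \<infinity>"
proof -
  have S0: "finite S" "0 \<in> S" using S by (auto simp: finite_subgroup_def is_subgroup_def)
  note tS = traj_card[OF S0 e]
  have cS: "card S \<ge> 1" using S0 by (metis One_nat_def Suc_leI card_gt_0_iff empty_iff)
  have "\<forall>m. ln (real (card (trajectory \<phi> S m))) \<le> real m * ln (real (card S))"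
  proof
    fix m
    have "ln (real (card (trajectory \<phi> S m))) \<le> ln (real (card S ^ m))" using tS[of m] by (intro ln_mono) (simp_all only: of_nat_le_iff, auto)
    also have "\<dots> = real m * ln (real (card S))" using cS by (simp add: ln_realpow)
    finally show "ln (real (card (trajectory \<phi> S m))) \<le> real m * ln (real (card S))" .
  qed
  then have "h_alg_F \<phi> S \<le> ereal (ln (real (card S)))" unfolding h_alg_F_def
    by (rule limsup_bound) (use cS in simp)
  then show ?thesis using le_less_trans by fastforce
qed

lemma h_eq:
  assumes S: "finite_subgroup S" and le: "\<And>F. finite_subgroup F \<Longrightarrow> h_alg_F \<phi> F \<le> h_alg_F \<phi> S"
  shows "h_alg \<phi> = h_alg_F \<phi> S"
  unfolding h_alg_def
  by (rule antisym) (auto intro!: SUP_least le SUP_upper S)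

lemma part1:
  assumes e: "endomorphism \<phi>" and g: "positive_generator \<phi> S"
  shows "h_alg \<phi> = h_alg_F \<phi> S"
proof -
  have S: "finite_subgroup S" using g by (simp add: positive_generator_def)
  show ?thesis
  proof (rule h_eq[OF S])
    fix F :: "'a set" assume F: "finite_subgroup F"
    obtain n where n: "F \<subseteq> sumset {0..n} (\<lambda>k. (\<phi> ^^ k) ` S)" using g F by (auto simp: positive_generator_def)
    have "{0..n} = {..<Suc n}" by auto
    then have n': "F \<subseteq> trajectory \<phi> S (Suc n)" using n by (simp add: trajectory_def)
    have S0: "finite S" "0 \<in> S" "is_subgroup S" using S by (auto simp: finite_subgroup_def is_subgroup_def)
    have "\<forall>m. card (trajectory \<phi> F m) \<le> card (trajectory \<phi> S (m + Suc n))"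
      using traj_key[OF e S0(3) n'] traj_card[OF S0(1,2) e] by (blast intro: card_mono)
    then show "h_alg_F \<phi> F \<le> h_alg_F \<phi> S" by (rule h_le[OF e S F])
  qed
qed


lemma pow_inv_cancel:
  fixes \<phi> :: "'a \<Rightarrow> 'a" and j :: nat
  assumes "surj \<phi>"
  shows "(\<phi> ^^ j) (((inv \<phi>) ^^ j) x) = x"
proof (induction j)
  case 0 then show ?case by simp
next
  case (Suc j)
  have "(\<phi> ^^ Suc j) (((inv \<phi>) ^^ Suc j) x) = (\<phi> ^^ j) (\<phi> (inv \<phi> (((inv \<phi>) ^^ j) x)))"
  proof -
    have "\<phi> ^^ Suc j = \<phi> ^^ j \<circ> \<phi>" by (rule funpow_Suc_right)
    moreover have "(inv \<phi>) ^^ Suc j = inv \<phi> \<circ> (inv \<phi>) ^^ j" by simp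
    ultimately show ?thesis by simp
  qed
  also have "\<dots> = (\<phi> ^^ j) (((inv \<phi>) ^^ j) x)" using assms by (simp add: surj_f_inv_f)
  finally show ?case using Suc by simp
qed

lemma int_pow_shift:
  assumes "surj \<phi>" "k \<in> {- int n..int n}"
  shows "(\<phi> ^^ n) (int_pow \<phi> k x) = (\<phi> ^^ nat (k + int n)) x"
proof (cases "0 \<le> k")
  case True
  then have "nat (k + int n) = n + nat k" by simp
  then show ?thesis using True by (simp add: int_pow_def funpow_add)
next
  case False
  define j where "j = nat (- k)"
  have jn: "j \<le> n" using assms(2) False unfolding j_def by auto
  have nk: "nat (k + int n) = n - j" using False jn unfolding j_def by auto
  have "n = (n - j) + j" using jn by simp
  then have "(\<phi> ^^ n) = (\<phi> ^^ (n - j)) \<circ> (\<phi> ^^ j)" by (metis funpow_add)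
  then have "(\<phi> ^^ n) (int_pow \<phi> k x) = (\<phi> ^^ (n - j)) ((\<phi> ^^ j) (((inv \<phi>) ^^ j) x))"
    using False unfolding int_pow_def j_def by simp
  then show ?thesis using pow_inv_cancel[OF assms(1)] nk by simp
qed

lemma part2:
  assumes a: "automorphism \<phi>" and g: "generator \<phi> S"
  shows "h_alg \<phi> = h_alg_F \<phi> S"
proof -
  have e: "endomorphism \<phi>" and b: "bij \<phi>" using a by (auto simp: automorphism_def)
  have S: "finite_subgroup S" using g by (simp add: generator_def)
  have S0: "finite S" "0 \<in> S" "is_subgroup S" using S by (auto simp: finite_subgroup_def is_subgroup_def)
  show ?thesis
  proof (rule h_eq[OF S])
    fix F :: "'a set" assume F: "finite_subgroup F"
    have F0: "finite F" "0 \<in> F" using F by (auto simp: finite_subgroup_def is_subgroup_def)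
    obtain n where n: "F \<subseteq> sumset {- int n..int n} (\<lambda>k. int_pow \<phi> k ` S)"
      using g F by (auto simp: generator_def)
    let ?\<psi> = "\<phi> ^^ n"
    have e\<psi>: "endomorphism ?\<psi>" by (rule endo_pow[OF e])
    have inj\<psi>: "inj ?\<psi>" using b by (simp add: bij_is_inj)
    let ?T = "trajectory \<phi> S (Suc (2 * n))"
    have H: "is_subgroup ?T" by (rule traj_subgroup[OF e S0(3)])
    have z: "\<forall>l\<in>{..<Suc (2 * n)}. 0 \<in> (\<phi> ^^ l) ` S"
      using pow_image_subgroup[OF e S0(3)] unfolding is_subgroup_def by blast
    have "?\<psi> ` F \<subseteq> ?\<psi> ` sumset {- int n..int n} (\<lambda>k. int_pow \<phi> k ` S)" using n by blast
    also have "\<dots> \<subseteq> sumset {- int n..int n} (\<lambda>k. ?\<psi> ` int_pow \<phi> k ` S)"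
      by (rule endo_image_sumset[OF e\<psi>])
    also have "\<dots> \<subseteq> ?T"
    proof (rule sumset_le_subgroup[OF H], intro ballI)
      fix k assume k: "k \<in> {- int n..int n}"
      have "?\<psi> ` int_pow \<phi> k ` S = (\<phi> ^^ nat (k + int n)) ` S"
        using int_pow_shift[OF bij_is_surj[OF b] k] by (auto simp: image_comp image_def)
      also have "\<dots> \<subseteq> ?T" unfolding trajectory_def
        by (rule sumset_single) (use k z in auto)
      finally show "?\<psi> ` int_pow \<phi> k ` S \<subseteq> ?T" .
    qed
    finally have \<psi>F: "?\<psi> ` F \<subseteq> ?T" .
    have \<psi>F0: "finite (?\<psi> ` F)" "0 \<in> ?\<psi> ` F" using F0 endo_0[OF e\<psi>] by (auto intro: image_eqI[of 0 _ 0])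
    have "card (trajectory \<phi> F m) \<le> card (trajectory \<phi> S (m + Suc (2 * n)))" for m
    proof -
      have "?\<psi> ` trajectory \<phi> F m \<subseteq> sumset {..<m} (\<lambda>k. ?\<psi> ` (\<phi> ^^ k) ` F)"
        unfolding trajectory_def by (rule endo_image_sumset[OF e\<psi>])
      also have "\<dots> = trajectory \<phi> (?\<psi> ` F) m"
      proof -
        have "?\<psi> ` (\<phi> ^^ k) ` F = (\<phi> ^^ k) ` ?\<psi> ` F" for k
          by (simp add: image_comp funpow_add[symmetric] add.commute)
        then show ?thesis unfolding trajectory_def by simp
      qed
      finally have sub: "?\<psi> ` trajectory \<phi> F m \<subseteq> trajectory \<phi> (?\<psi> ` F) m" .
      have "card (trajectory \<phi> F m) = card (?\<psi> ` trajectory \<phi> F m)"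
        using inj\<psi> by (simp add: card_image inj_on_subset)
      also have "\<dots> \<le> card (trajectory \<phi> (?\<psi> ` F) m)"
        using sub traj_card[OF \<psi>F0 e] by (intro card_mono) auto
      also have "\<dots> \<le> card (trajectory \<phi> S (m + Suc (2 * n)))"
        using traj_key[OF e S0(3) \<psi>F] traj_card[OF S0(1,2) e] by (intro card_mono) auto
      finally show ?thesis .
    qed
    then show "h_alg_F \<phi> F \<le> h_alg_F \<phi> S" using h_le[OF e S F] by blast
  qed
qed

theorem theorem3p3:
  fixes \<phi> :: "'a::ab_group_add \<Rightarrow> 'a"
  shows "(\<forall>S. endomorphism \<phi> \<and> positive_generator \<phi> S \<longrightarrow> h_alg \<phi> = h_alg_F \<phi> S)
       \<and> (\<forall>S. automorphism \<phi> \<and> generator \<phi> S \<longrightarrow> h_alg \<phi> = h_alg_F \<phi> S)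
       \<and> (endomorphism \<phi> \<and> positively_expansive \<phi> \<longrightarrow> h_alg \<phi> < \<infinity>)
       \<and> (automorphism \<phi> \<and> expansive \<phi> \<longrightarrow> h_alg \<phi> < \<infinity>)"
proof (intro conjI allI impI)
  fix S assume "endomorphism \<phi> \<and> positive_generator \<phi> S"
  then show "h_alg \<phi> = h_alg_F \<phi> S" using part1 by blast
next
  fix S assume "automorphism \<phi> \<and> generator \<phi> S"
  then show "h_alg \<phi> = h_alg_F \<phi> S" using part2 by blast
next
  assume h: "endomorphism \<phi> \<and> positively_expansive \<phi>"
  then obtain S where S: "positive_generator \<phi> S" by (auto simp: positively_expansive_def)
  then have "finite_subgroup S" by (simp add: positive_generator_def)
  then show "h_alg \<phi> < \<infinity>" using part1[OF _ S] h_fin[of \<phi> S] h by simp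
next
  assume h: "automorphism \<phi> \<and> expansive \<phi>"
  then obtain S where S: "generator \<phi> S" by (auto simp: expansive_def)
  then have "finite_subgroup S" by (simp add: generator_def)
  moreover have "endomorphism \<phi>" using h by (simp add: automorphism_def)
  ultimately show "h_alg \<phi> < \<infinity>" using part2[OF _ S] h_fin h by simp
qed

end
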